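(* Consider a linear scoring model on items with feature vectors $x_i\in\mathbb{R}^d$ and weight vector $w\in\mathbb{R}^d$, with scores $s_i=\sum_{f=1}^d w_f x_{if}$. For a pair of items $(i,j)$ put $\Delta_{ij}^{(f)}=w_f(x_{if}-x_{jf})$ and $Z_{ij}=\sum_{f=1}^d|\Delta_{ij}^{(f)}|$, and suppose $Z_{ij}>0$. Let $\{\Psi^{(d)}\}_{d\ge1}$ be any family of maps $\Psi^{(d)}:\mathbb{R}^d_{\ge0}\setminus\{0\}\to\Delta^{d-1}$ (values in the standard simplex) satisfying refinement consistency: for every $d$, every $a\in\mathbb{R}^d_{\ge0}\setminus\{0\}$, every $k$ and every $r,q\ge0$ with $r+q=a_k$, the vector $a^{[k\to(r,q)]}=(a_1,\dots,a_{k-1},r,q,a_{k+1},\dots,a_d)$ satisfies, if $a_k>0$, $\Psi^{(d+1)}(a^{[k\to(r,q)]})=(\Psi^{(d)}_1(a),\dots,\Psi^{(d)}_{k-1}(a),\frac{r}{a_k}\Psi^{(d)}_k(a),\frac{q}{a_k}\Psi^{(d)}_k(a),\Psi^{(d)}_{k+1}(a),\dots,\Psi^{(d)}_d(a))$, and, if $a_k=0$, $\Psi^{(d+1)}(a^{[k\to(0,0)]})$ agrees with $\Psi^{(d)}(a)$ on non-refined coordinates and is $0$ on the two refined coordinates. Then, with $a_f=|\Delta_{ij}^{(f)}|$, for every $f$, \[ \Psi^{(d)}_f(a)=\rho_{ij}^{(f)}:=\frac{|\Delta_{ij}^{(f)}|}{Z_{ij}}. \] That is, the influence share $\rho_{ij}^{(f)}$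 is the unique refinement-consistent local budgeting rule for linear pairwise effort.
   Context: $\Delta^{d-1}$ denotes the standard simplex $\{p\in\mathbb{R}^d_{\ge0}:\sum_f p_f=1\}$. A pair with $Z_{ij}>0$ is called informative; $\rho_{ij}^{(f)}$ is the local influence share of factor $f$. *)

theory Defs
  imports Complex_Main
begin

text \<open>Vectors in R^d are represented as real lists of length d (coordinate f is at
 list index f, 0-based). A family of maps Psi^(d) : R^d_{>=0} minus 0 -> simplex, d >= 1,
 is represented by one function on lists; Psi^(d) is its restriction to lists of length d.\<close>

definition nonneg_nonzero :: "real list \<Rightarrow> bool" where
  "nonneg_nonzero a \<longleftrightarrow> (\<forall>v\<in>set a. v \<ge> 0) \<and> (\<exists>v\<in>set a. v \<noteq> 0)"

definition in_simplex :: "nat \<Rightarrow> real list \<Rightarrow> bool" where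
  "in_simplex d p \<longleftrightarrow> length p = d \<and> (\<forall>v\<in>set p. v \<ge> 0) \<and> sum_list p = 1"

definition refine :: "real list \<Rightarrow> nat \<Rightarrow> real \<Rightarrow> real \<Rightarrow> real list" where
  "refine a k r q = take k a @ [r, q] @ drop (Suc k) a"

definition simplex_valued :: "(real list \<Rightarrow> real list) \<Rightarrow> bool" where
  "simplex_valued \<Psi> \<longleftrightarrow> (\<forall>a. nonneg_nonzero a \<longrightarrow> in_simplex (length a) (\<Psi> a))"

definition refinement_consistent :: "(real list \<Rightarrow> real list) \<Rightarrow> bool" where
  "refinement_consistent \<Psi> \<longleftrightarrow>
    (\<forall>a k r q. nonneg_nonzero a \<longrightarrow> k < length a \<longrightarrow> r \<ge> 0 \<longrightarrow> q \<ge> 0 \<longrightarrow> r + q = a ! k \<longrightarrow>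
       (a ! k > 0 \<longrightarrow> \<Psi> (refine a k r q) =
           take k (\<Psi> a) @ [r / a ! k * \<Psi> a ! k, q / a ! k * \<Psi> a ! k] @ drop (Suc k) (\<Psi> a)) \<and>
       (a ! k = 0 \<longrightarrow> \<Psi> (refine a k 0 0) =
           take k (\<Psi> a) @ [0, 0] @ drop (Suc k) (\<Psi> a)))"

definition score :: "nat \<Rightarrow> (nat \<Rightarrow> real) \<Rightarrow> ('i \<Rightarrow> nat \<Rightarrow> real) \<Rightarrow> 'i \<Rightarrow> real" where
  "score d w x i = (\<Sum>f<d. w f * x i f)"

definition Delta :: "(nat \<Rightarrow> real) \<Rightarrow> ('i \<Rightarrow> nat \<Rightarrow> real) \<Rightarrow> 'i \<Rightarrow> 'i \<Rightarrow> nat \<Rightarrow> real" where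
  "Delta w x i j f = w f * (x i f - x j f)"

definition Zpair :: "nat \<Rightarrow> (nat \<Rightarrow> real) \<Rightarrow> ('i \<Rightarrow> nat \<Rightarrow> real) \<Rightarrow> 'i \<Rightarrow> 'i \<Rightarrow> real" where
  "Zpair d w x i j = (\<Sum>f<d. \<bar>Delta w x i j f\<bar>)"

definition rho :: "nat \<Rightarrow> (nat \<Rightarrow> real) \<Rightarrow> ('i \<Rightarrow> nat \<Rightarrow> real) \<Rightarrow> 'i \<Rightarrow> 'i \<Rightarrow> nat \<Rightarrow> real" where
  "rho d w x i j f = \<bar>Delta w x i j f\<bar> / Zpair d w x i j"

end

theory Submission
  imports Defs
begin

lemma key:
  assumes sv: "simplex_valued \<Psi>" and rc: "refinement_consistent \<Psi>"
  shows "(\<forall>v\<in>set p. v \<ge> 0) \<Longrightarrow> t \<ge> 0 \<Longrightarrow> sum_list p + t > 0 \<Longrightarrow>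
     \<Psi> (p @ [t]) = map (\<lambda>v. v / (sum_list p + t)) (p @ [t])"
proof (induction p arbitrary: t rule: rev_induct)
  case Nil
  have nn: "nonneg_nonzero [t]" using Nil by (auto simp: nonneg_nonzero_def)
  with sv have "in_simplex 1 (\<Psi> [t])" by (auto simp: simplex_valued_def)
  then obtain c where "\<Psi> [t] = [c]" "c = 1"
    by (auto simp: in_simplex_def length_Suc_conv)
  then show ?case using Nil by simp
next
  case (snoc v p)
  define S where "S = sum_list p + (v + t)"
  have S: "sum_list (p @ [v]) + t = S" by (simp add: S_def)
  have v0: "v \<ge> 0" using snoc by auto
  have IH: "\<Psi> (p @ [v + t]) = map (\<lambda>u. u / S) (p @ [v + t])"
    using snoc.IH[of "v + t"] snoc.prems S by (simp add: S_def add.assoc)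
  have Spos: "S > 0" using snoc.prems S by simp
  have nn: "nonneg_nonzero (p @ [v + t])"
  proof -
    have "\<exists>u\<in>set (p @ [v + t]). u \<noteq> 0"
    proof (rule ccontr)
      assume "\<not> ?thesis"
      then have "\<forall>u\<in>set (p @ [v+t]). u = 0" by auto
      then have "sum_list (p @ [v+t]) = 0" by (metis sum_list_0 map_idI)
      then show False using Spos by (simp add: S_def)
    qed
    then show ?thesis using snoc.prems v0 by (auto simp: nonneg_nonzero_def)
  qed
  have ref: "refine (p @ [v + t]) (length p) v t = p @ [v] @ [t]"
    by (simp add: refine_def)
  have rc': "(v + t > 0 \<longrightarrow> \<Psi> (refine (p @ [v + t]) (length p) v t) =
           take (length p) (\<Psi> (p @ [v + t])) @ [v / (v+t) * \<Psi> (p @ [v + t]) ! length p,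
              t / (v+t) * \<Psi> (p @ [v + t]) ! length p] @ drop (Suc (length p)) (\<Psi> (p @ [v + t]))) \<and>
       (v + t = 0 \<longrightarrow> \<Psi> (refine (p @ [v + t]) (length p) 0 0) =
           take (length p) (\<Psi> (p @ [v + t])) @ [0, 0] @ drop (Suc (length p)) (\<Psi> (p @ [v + t])))"
    using rc nn v0 snoc.prems unfolding refinement_consistent_def
    by (metis length_append_singleton lessI nth_append_length)
  show ?case
  proof (cases "v + t > 0")
    case True
    then have "\<Psi> (p @ [v] @ [t]) = map (\<lambda>u. u / S) p @ [v / (v+t) * ((v+t)/S), t/(v+t) * ((v+t)/S)]"
      using rc' ref IH by (simp add: nth_append)
    also have "\<dots> = map (\<lambda>u. u / S) (p @ [v] @ [t])" using True by simp
    finally show ?thesis using S by simp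
  next
    case False
    then have "v = 0" "t = 0" using v0 snoc.prems by auto
    then have "\<Psi> (p @ [v] @ [t]) = map (\<lambda>u. u / S) p @ [0, 0]"
      using rc' ref IH by simp
    then show ?thesis using S \<open>v = 0\<close> \<open>t = 0\<close> by simp
  qed
qed

lemma general:
  assumes sv: "simplex_valued \<Psi>" and rc: "refinement_consistent \<Psi>"
    and nn: "\<forall>v\<in>set a. v \<ge> 0" and pos: "sum_list a > 0"
  shows "\<Psi> a = map (\<lambda>v. v / sum_list a) a"
proof -
  have "a \<noteq> []" using pos by auto
  then have a: "a = butlast a @ [last a]" by simp
  have "\<Psi> (butlast a @ [last a]) = map (\<lambda>v. v / (sum_list (butlast a) + last a)) (butlast a @ [last a])"
    apply (rule key[OF sv rc])
    using nn pos a by (metis in_set_butlastD, metis last_in_set \<open>a \<noteq> []\<close>,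
        metis sum_list_append sum_list.Cons sum_list.Nil add_0_right)
  then show ?thesis using a by (metis sum_list_append sum_list.Cons sum_list.Nil add_0_right)
qed

theorem corollary4p2:
  fixes \<Psi> :: "real list \<Rightarrow> real list"
    and d :: nat and w :: "nat \<Rightarrow> real" and x :: "'i \<Rightarrow> nat \<Rightarrow> real" and i j :: 'i
  assumes "simplex_valued \<Psi>"
    and "refinement_consistent \<Psi>"
    and "Zpair d w x i j > 0"
  shows "\<forall>f<d. \<Psi> (map (\<lambda>g. \<bar>Delta w x i j g\<bar>) [0..<d]) ! f = rho d w x i j f"
proof -
  let ?a = "map (\<lambda>g. \<bar>Delta w x i j g\<bar>) [0..<d]"
  have s: "sum_list ?a = Zpair d w x i j"
    unfolding Zpair_def by (metis atLeast0LessThan atLeastLessThan_upt sum_set_upt_conv_sum_list_nat)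
  have "\<Psi> ?a = map (\<lambda>v. v / sum_list ?a) ?a"
    by (rule general[OF assms(1,2)]) (use s assms(3) in auto)
  then show ?thesis using s by (simp add: rho_def)
qed

end
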